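(* Let $L_0,\ldots,L_{m-1}$ be Laplacian matrices of non-negatively weighted digraphs on the node set $\{1,\ldots,N\}$, $N\ge2$. Let $\bar{\Delta}=[\mathbf{1}_{N-1},\,-I_{N-1}]\in\mathbb{R}^{(N-1)\times N}$ and $\Delta=\begin{bmatrix}1&0_{1\times(N-1)}\\ \mathbf{1}_{N-1}&-I_{N-1}\end{bmatrix}$ (so that $\Delta\Delta=I_N$). For each $j$ write $\Delta L_j\Delta=\begin{bmatrix}0&*\\0&\tilde{L}_j\end{bmatrix}$ with $\tilde{L}_j\in\mathbb{R}^{(N-1)\times(N-1)}$. If the digraph whose Laplacian is $\sum_{j=0}^{m-1}L_j$ contains a directed spanning tree, then $$\bigcap_{j=0}^{m-1}\mathrm{Eig}(\tilde{L}_j)=\{\mathbf{0}\},$$ where $\mathrm{Eig}(M)$ denotes the subspace spanned by the generalized eigenvectors of $M$ associated with the eigenvalue $0$.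
   Context: A weighted digraph on $\{1,\ldots,N\}$ has adjacency matrix $W=[a_{ij}]$ with $a_{ij}\ge0$, $a_{ii}=0$, and $a_{ij}>0$ iff $(j,i)$ is an edge; its Laplacian is $L=\mathrm{diag}\{\sum_j a_{1j},\ldots,\sum_j a_{Nj}\}-W$, so $L\mathbf{1}_N=0$. A digraph contains a directed spanning tree if some node has a directed path (sequence of edges $(i_1,i_2),(i_2,i_3),\ldots$) to every other node. A generalized eigenvector of $M$ for eigenvalue $\lambda$ is a nonzero $v$ with $(M-\lambda I)^qv=0$ for some positive integer $q$. *)

theory Defs
  imports "Jordan_Normal_Form.Matrix"
begin

text \<open>Adjacency matrices of non-negatively weighted digraphs on nodes 0..N-1
  (paper: 1..N). Entry (i,j) positive iff (j,i) is an edge.\<close>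
definition is_adjacency :: "nat \<Rightarrow> real mat \<Rightarrow> bool" where
  "is_adjacency N W \<longleftrightarrow> W \<in> carrier_mat N N \<and>
     (\<forall>i<N. \<forall>j<N. W $$ (i,j) \<ge> 0) \<and> (\<forall>i<N. W $$ (i,i) = 0)"

definition laplacian_of :: "nat \<Rightarrow> real mat \<Rightarrow> real mat" where
  "laplacian_of N W = mat N N (\<lambda>(i,j). (if i = j then (\<Sum>k<N. W $$ (i,k)) else 0)) - W"

definition is_laplacian :: "nat \<Rightarrow> real mat \<Rightarrow> bool" where
  "is_laplacian N L \<longleftrightarrow> (\<exists>W. is_adjacency N W \<and> L = laplacian_of N W)"

definition adjacency_of_laplacian :: "nat \<Rightarrow> real mat \<Rightarrow> real mat" where
  "adjacency_of_laplacian N L = mat N N (\<lambda>(i,j). if i = j then 0 else - L $$ (i,j))"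

definition digraph_edges :: "nat \<Rightarrow> real mat \<Rightarrow> (nat \<times> nat) set" where
  "digraph_edges N W = {(j,i). i < N \<and> j < N \<and> W $$ (i,j) > 0}"

definition has_spanning_tree :: "nat \<Rightarrow> real mat \<Rightarrow> bool" where
  "has_spanning_tree N W \<longleftrightarrow> (\<exists>r<N. \<forall>k<N. k \<noteq> r \<longrightarrow> (r,k) \<in> (digraph_edges N W)\<^sup>+)"

definition Delta_mat :: "nat \<Rightarrow> real mat" where
  "Delta_mat N = mat N N (\<lambda>(i,k). if i = 0 then (if k = 0 then 1 else 0)
                                  else (if k = 0 then 1 else if k = i then -1 else 0))"

definition reduced_laplacian :: "nat \<Rightarrow> real mat \<Rightarrow> real mat" where
  "reduced_laplacian N L =
     (let P = Delta_mat N * L * Delta_mat N in mat (N-1) (N-1) (\<lambda>(i,k). P $$ (i+1,k+1)))"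

definition gen_eigenvector :: "real mat \<Rightarrow> real \<Rightarrow> real vec \<Rightarrow> bool" where
  "gen_eigenvector M lam v \<longleftrightarrow> v \<in> carrier_vec (dim_row M) \<and> v \<noteq> 0\<^sub>v (dim_row M) \<and>
     (\<exists>q>0. ((M - lam \<cdot>\<^sub>m 1\<^sub>m (dim_row M)) ^\<^sub>m q) *\<^sub>v v = 0\<^sub>v (dim_row M))"

definition vec_span :: "nat \<Rightarrow> real vec set \<Rightarrow> real vec set" where
  "vec_span n S = {v. \<exists>vs cs. length cs = length vs \<and> set vs \<subseteq> S \<and>
       v = foldr (+) (map2 (\<lambda>c w. c \<cdot>\<^sub>v w) cs vs) (0\<^sub>v n)}"

definition Eig :: "real mat \<Rightarrow> real vec set" where
  "Eig M = vec_span (dim_row M) {v. gen_eigenvector M 0 v}"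

end

theory Submission
  imports Defs
begin

definition lap :: "real mat \<Rightarrow> nat \<Rightarrow> (nat \<Rightarrow> real) \<Rightarrow> nat \<Rightarrow> real" where
  "lap W N x i = (\<Sum>k<N. W $$ (i,k) * (x i - x k))"

lemma closure_max:
  assumes "\<forall>k<N. W $$ (i,k) \<ge> 0" "\<forall>k<N. y k \<le> y i" "lap W N y i = 0" "k<N" "W $$ (i,k) > 0"
  shows "y k = y i"
proof -
  have nn: "\<forall>k\<in>{..<N}. W $$ (i,k) * (y i - y k) \<ge> 0" using assms(1,2) by simp
  have "\<forall>k\<in>{..<N}. W $$ (i,k) * (y i - y k) = 0"
    using sum_nonneg_eq_0_iff[of "{..<N}" "\<lambda>k. W $$ (i,k) * (y i - y k)"] nn assms(3) unfolding lap_def by simp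
  then have "W $$ (i,k) = 0 \<or> y i = y k" using assms(4) by simp
  then show ?thesis using assms(5) by auto
qed

lemma semisimple_pos:
  assumes W: "\<forall>i<N. \<forall>k<N. W $$ (i,k) \<ge> 0"
    and y: "\<forall>i<N. y i = lap W N x i" and ly: "\<forall>i<N. lap W N y i = 0"
    and i1: "i1 < N" "y i1 > 0"
  shows False
proof -
  define M where "M = Max (y ` {..<N})"
  have fin: "finite (y ` {..<N})" and ne: "y ` {..<N} \<noteq> {}" using i1 by auto
  have Mge: "\<forall>k<N. y k \<le> M" unfolding M_def using fin by auto
  obtain iM where iM: "iM < N" "y iM = M" using Max_in[OF fin ne] unfolding M_def by auto
  define S where "S = {i. i < N \<and> y i = M}"
  have finS: "finite (x ` S)" unfolding S_def by auto
  have neS: "x ` S \<noteq> {}" using iM unfolding S_def by auto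
  obtain i0 where i0: "i0 \<in> S" "x i0 = Min (x ` S)" using Min_in[OF finS neS] by auto
  have xmin: "\<forall>k\<in>S. x i0 \<le> x k" using i0 finS by auto
  have "M \<ge> y i1" using Mge i1 by auto
  have i0N: "i0 < N" and yi0: "y i0 = M" using i0 unfolding S_def by auto
  have "\<forall>k\<in>{..<N}. W $$ (i0,k) * (x i0 - x k) \<le> 0"
  proof
    fix k assume k: "k \<in> {..<N}"
    show "W $$ (i0,k) * (x i0 - x k) \<le> 0"
    proof (cases "W $$ (i0,k) > 0")
      case True
      have "y k = y i0" using closure_max[of N W i0 y k] W i0N Mge yi0 ly True k by auto
      then have "k \<in> S" using k yi0 unfolding S_def by auto
      then have "x i0 \<le> x k" using xmin by auto
      then show ?thesis using True by (simp add: mult_nonneg_nonpos)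
    next
      case False
      then have "W $$ (i0,k) = 0" using W i0N k by force
      then show ?thesis by simp
    qed
  qed
  then have "lap W N x i0 \<le> 0" unfolding lap_def by (meson sum_nonpos)
  then show False using y i0N yi0 \<open>M \<ge> y i1\<close> i1 by auto
qed

lemma lap_neg: "lap W N (\<lambda>i. - x i) i = - lap W N x i"
  unfolding lap_def by (simp add: sum_negf[symmetric] algebra_simps)

lemma semisimple:
  assumes W: "\<forall>i<N. \<forall>k<N. W $$ (i,k) \<ge> 0"
    and y: "\<forall>i<N. y i = lap W N x i" and ly: "\<forall>i<N. lap W N y i = 0"
    and i: "i < N"
  shows "y i = 0"
proof (rule ccontr)
  assume "y i \<noteq> 0"
  then consider "y i > 0" | "y i < 0" by linarith
  then show False
  proof cases
    case 1 then show ?thesis using semisimple_pos[OF W y ly i] by auto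
  next
    case 2
    have "\<forall>i<N. (- y i) = lap W N (\<lambda>i. - x i) i" using y lap_neg by simp
    moreover have "\<forall>i<N. lap W N (\<lambda>i. - y i) i = 0" using ly lap_neg by simp
    ultimately show ?thesis using semisimple_pos[OF W, of "\<lambda>i. - y i" "\<lambda>i. - x i" i] i 2 by auto
  qed
qed

lemma const_le_root:
  fixes Wf :: "nat \<Rightarrow> real mat" and E :: "(nat \<times> nat) set"
  assumes W: "\<forall>j<m. \<forall>i<N. \<forall>k<N. Wf j $$ (i,k) \<ge> 0"
    and lx: "\<forall>j<m. \<forall>i<N. lap (Wf j) N x i = 0"
    and E: "\<And>i k. (k,i) \<in> E \<Longrightarrow> i < N \<and> k < N \<and> (\<exists>j<m. Wf j $$ (i,k) > 0)"
    and r: "r < N" "\<forall>k<N. k \<noteq> r \<longrightarrow> (r,k) \<in> E\<^sup>+"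
  shows "\<forall>k<N. x k \<le> x r"
proof -
  define M where "M = Max (x ` {..<N})"
  have fin: "finite (x ` {..<N})" and ne: "x ` {..<N} \<noteq> {}" using r by auto
  have Mge: "\<forall>k<N. x k \<le> M" unfolding M_def using fin by auto
  obtain iM where iM: "iM < N" "x iM = M" using Max_in[OF fin ne] unfolding M_def by auto
  define S where "S = {i. i < N \<and> x i = M}"
  have cl: "k \<in> S" if ki: "(k,i) \<in> E" "i \<in> S" for k i
  proof -
    obtain j where j: "j < m" "Wf j $$ (i,k) > 0" and ik: "i < N" "k < N" using E[OF ki(1)] by auto
    have "x k = x i"
      using closure_max[of N "Wf j" i x k] W lx j ik ki(2) Mge unfolding S_def by auto
    then show ?thesis using ki(2) ik unfolding S_def by auto
  qed
  have tr: "a \<in> S" if "(a,b) \<in> E\<^sup>+" "b \<in> S" for a b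
    using that
  proof (induction rule: trancl_induct)
    case (base y) then show ?case using cl by blast
  next
    case (step y z) then show ?case using cl by blast
  qed
  have "iM \<in> S" using iM unfolding S_def by auto
  then have "r \<in> S" using tr r iM by (cases "iM = r") auto
  then show ?thesis using Mge unfolding S_def by auto
qed

lemma const_root:
  fixes Wf :: "nat \<Rightarrow> real mat" and E :: "(nat \<times> nat) set"
  assumes W: "\<forall>j<m. \<forall>i<N. \<forall>k<N. Wf j $$ (i,k) \<ge> 0"
    and lx: "\<forall>j<m. \<forall>i<N. lap (Wf j) N x i = 0"
    and E: "\<And>i k. (k,i) \<in> E \<Longrightarrow> i < N \<and> k < N \<and> (\<exists>j<m. Wf j $$ (i,k) > 0)"
    and r: "r < N" "\<forall>k<N. k \<noteq> r \<longrightarrow> (r,k) \<in> E\<^sup>+"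
  shows "\<forall>k<N. x k = x r"
proof -
  have 1: "\<forall>k<N. x k \<le> x r" using const_le_root[OF W lx E r] by blast
  have "\<forall>j<m. \<forall>i<N. lap (Wf j) N (\<lambda>i. - x i) i = 0" using lx lap_neg by simp
  then have 2: "\<forall>k<N. - x k \<le> - x r" using const_le_root[OF W _ E r, of "\<lambda>i. - x i"] by blast
  show ?thesis using 1 2 by force
qed

lemma lapL:
  assumes "W \<in> carrier_mat N N" "a < N"
  shows "(\<Sum>b<N. laplacian_of N W $$ (a,b) * x b) = lap W N x a"
proof -
  have "(\<Sum>b<N. laplacian_of N W $$ (a,b) * x b)
     = (\<Sum>b<N. (if a = b then (\<Sum>k<N. W $$ (a,k)) * x b else 0) - W $$ (a,b) * x b)"
    using assms by (intro sum.cong) (auto simp: laplacian_of_def algebra_simps)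
  also have "\<dots> = (\<Sum>k<N. W $$ (a,k)) * x a - (\<Sum>b<N. W $$ (a,b) * x b)"
    using assms by (simp add: sum_subtractf)
  also have "\<dots> = (\<Sum>k<N. W $$ (a,k) * x a - W $$ (a,k) * x k)"
    by (simp add: sum_distrib_right sum_subtractf)
  also have "\<dots> = lap W N x a" unfolding lap_def
    by (simp add: right_diff_distrib)
  finally show ?thesis .
qed

definition zf :: "real vec \<Rightarrow> nat \<Rightarrow> real" where
  "zf v b = (if b = 0 then 0 else v $ (b - 1))"

lemma red_carrier: "reduced_laplacian N L \<in> carrier_mat (N-1) (N-1)"
  unfolding reduced_laplacian_def Let_def by simp

lemma delta_entry: "i < N \<Longrightarrow> k < N \<Longrightarrow> Delta_mat N $$ (i,k) =
   (if i = 0 then (if k = 0 then 1 else 0) else (if k = 0 then 1 else if k = i then -1 else 0))"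
  unfolding Delta_mat_def by simp

lemma red_entry:
  assumes L: "L \<in> carrier_mat N N" and N: "N = Suc n" and i: "i < n" and k: "k < n"
  shows "reduced_laplacian N L $$ (i,k) = L $$ (Suc i, Suc k) - L $$ (0, Suc k)"
proof -
  have D: "Delta_mat N \<in> carrier_mat N N" unfolding Delta_mat_def by simp
  have si: "Suc i < N" and sk: "Suc k < N" using i k N by auto
  have DL: "(Delta_mat N * L) $$ (Suc i, c) = L $$ (0, c) - L $$ (Suc i, c)" if c: "c < N" for c
  proof -
    have "(Delta_mat N * L) $$ (Suc i, c) = (\<Sum>a\<in>{0..<N}. Delta_mat N $$ (Suc i, a) * L $$ (a, c))"
      using D L c si by (simp add: scalar_prod_def)
    also have "\<dots> = (\<Sum>a\<in>{0..<N}. (if a = 0 then L $$ (a, c) else 0) - (if a = Suc i then L $$ (a,c) else 0))"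
      using si by (intro sum.cong) (auto simp: delta_entry)
    also have "\<dots> = L $$ (0, c) - L $$ (Suc i, c)"
      using si by (simp add: sum_subtractf)
    finally show ?thesis .
  qed
  have "(Delta_mat N * L * Delta_mat N) $$ (Suc i, Suc k)
     = row (Delta_mat N * L) (Suc i) \<bullet> col (Delta_mat N) (Suc k)"
    using D L si sk by (intro index_mult_mat(1)) auto
  also have "\<dots> = (\<Sum>b\<in>{0..<N}. (Delta_mat N * L) $$ (Suc i, b) * Delta_mat N $$ (b, Suc k))"
    unfolding scalar_prod_def using D L si sk by (intro sum.cong) (auto simp del: index_mult_mat(1) simp: index_mult_mat(1)[of "Suc i" "Delta_mat N" _ L, symmetric])
  also have "\<dots> = (\<Sum>b\<in>{0..<N}. (if b = Suc k then - (Delta_mat N * L) $$ (Suc i, b) else 0))"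
    using sk by (intro sum.cong) (auto simp: delta_entry)
  also have "\<dots> = - (Delta_mat N * L) $$ (Suc i, Suc k)" using sk by simp
  also have "\<dots> = L $$ (Suc i, Suc k) - L $$ (0, Suc k)" using DL sk by simp
  finally show ?thesis unfolding reduced_laplacian_def Let_def using i k N by simp
qed

lemma red_mult:
  assumes L: "L \<in> carrier_mat N N" and N: "N = Suc n" and i: "i < n" and v: "v \<in> carrier_vec n"
  shows "(reduced_laplacian N L *\<^sub>v v) $ i
     = (\<Sum>b<N. L $$ (Suc i, b) * zf v b) - (\<Sum>b<N. L $$ (0, b) * zf v b)"
proof -
  have "(reduced_laplacian N L *\<^sub>v v) $ i = (\<Sum>k\<in>{0..<n}. reduced_laplacian N L $$ (i,k) * v $ k)"
    using red_carrier[of N L] i v N by (simp add: scalar_prod_def)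
  also have "\<dots> = (\<Sum>k<n. L $$ (Suc i, Suc k) * v $ k - L $$ (0, Suc k) * v $ k)"
    unfolding atLeast0LessThan
    by (intro sum.cong) (simp_all add: red_entry[OF L N i] left_diff_distrib)
  also have "\<dots> = (\<Sum>b<N. L $$ (Suc i, b) * zf v b) - (\<Sum>b<N. L $$ (0, b) * zf v b)"
    unfolding N sum.lessThan_Suc_shift by (simp add: zf_def sum_subtractf)
  finally show ?thesis .
qed

lemma lap_shift:
  assumes "\<forall>k<N. x k = y k + c" "a < N"
  shows "lap W N x a = lap W N y a"
  unfolding lap_def using assms by (intro sum.cong) auto

lemma lap_const0: "lap W N (\<lambda>_. 0) a = 0"
  unfolding lap_def by simp

locale redlap =
  fixes N n :: nat and W :: "real mat"
  assumes Wc: "W \<in> carrier_mat N N"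
    and Wnn: "\<forall>i<N. \<forall>k<N. W $$ (i,k) \<ge> 0"
    and Nn: "N = Suc n"
begin

abbreviation "R \<equiv> reduced_laplacian N (laplacian_of N W)"

lemma Lc: "laplacian_of N W \<in> carrier_mat N N"
  using Wc unfolding laplacian_of_def by (intro minus_carrier_mat) auto

lemma Rc: "R \<in> carrier_mat n n" using red_carrier[of N "laplacian_of N W"] Nn by simp

lemma red_lap:
  assumes "v \<in> carrier_vec n" "i < n"
  shows "(R *\<^sub>v v) $ i = lap W N (zf v) (Suc i) - lap W N (zf v) 0"
  using red_mult[OF Lc Nn assms(2,1)] lapL[OF Wc] assms Nn by simp

lemma red_zero:
  assumes u: "u \<in> carrier_vec n" and z: "R *\<^sub>v u = 0\<^sub>v n"
  shows "\<forall>a<N. lap W N (zf u) a = 0"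
proof -
  define c where "c = lap W N (zf u) 0"
  have h1: "\<forall>a<N. lap W N (zf u) a = 0 + c"
  proof (intro allI impI)
    fix a assume a: "a < N"
    show "lap W N (zf u) a = 0 + c"
    proof (cases a)
      case 0 then show ?thesis by (simp add: c_def)
    next
      case (Suc i)
      then have i: "i < n" using a Nn by simp
      have "(R *\<^sub>v u) $ i = 0" using z i by simp
      then show ?thesis using red_lap[OF u i] Suc c_def by simp
    qed
  qed
  have h2: "\<forall>a<N. lap W N (lap W N (zf u)) a = 0"
    using lap_shift[OF h1] lap_const0 by metis
  have "\<forall>i<N. lap W N (zf u) i = lap W N (zf u) i" by simp
  then show ?thesis using semisimple[OF Wnn _ h2] by blast
qed

lemma red_ss:
  assumes u: "u \<in> carrier_vec n" and z: "R *\<^sub>v (R *\<^sub>v u) = 0\<^sub>v n"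
  shows "R *\<^sub>v u = 0\<^sub>v n"
proof -
  define w where "w = R *\<^sub>v u"
  have wc: "w \<in> carrier_vec n" using Rc u unfolding w_def by simp
  have lw: "\<forall>a<N. lap W N (zf w) a = 0" using red_zero[OF wc] z unfolding w_def by simp
  define d where "d = lap W N (zf u) 0"
  have h3: "\<forall>a<N. lap W N (zf u) a = zf w a + d"
  proof (intro allI impI)
    fix a assume a: "a < N"
    show "lap W N (zf u) a = zf w a + d"
    proof (cases a)
      case 0 then show ?thesis by (simp add: d_def zf_def)
    next
      case (Suc i)
      then have i: "i < n" using a Nn by simp
      then show ?thesis using red_lap[OF u i] Suc d_def unfolding w_def zf_def by simp
    qed
  qed
  have h4: "\<forall>a<N. lap W N (lap W N (zf u)) a = 0"
    using lap_shift[OF h3] lw by metis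
  have "\<forall>i<N. lap W N (zf u) i = lap W N (zf u) i" by simp
  then have lu: "\<forall>a<N. lap W N (zf u) a = 0" using semisimple[OF Wnn _ h4] by blast
  show ?thesis
  proof (rule eq_vecI)
    show "dim_vec (R *\<^sub>v u) = dim_vec (0\<^sub>v n)" using Rc by simp
    fix i assume "i < dim_vec (0\<^sub>v n)"
    then have i: "i < n" by simp
    then show "(R *\<^sub>v u) $ i = 0\<^sub>v n $ i" using red_lap[OF u i] lu Nn by simp
  qed
qed

lemma gen_ker:
  assumes "gen_eigenvector R 0 v"
  shows "v \<in> carrier_vec n \<and> R *\<^sub>v v = 0\<^sub>v n"
proof -
  have dr: "dim_row R = n" using Rc by simp
  have R0: "R - 0 \<cdot>\<^sub>m 1\<^sub>m n = R" using Rc by (intro eq_matI) auto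
  obtain q where q: "q > 0" "(R ^\<^sub>m q) *\<^sub>v v = 0\<^sub>v n" and v: "v \<in> carrier_vec n"
    using assms unfolding gen_eigenvector_def dr R0 by auto
  have "\<forall>v. v \<in> carrier_vec n \<longrightarrow> (R ^\<^sub>m Suc p) *\<^sub>v v = 0\<^sub>v n \<longrightarrow> R *\<^sub>v v = 0\<^sub>v n" for p
  proof (induction p)
    case 0 then show ?case using Rc by simp
  next
    case (Suc p)
    show ?case
    proof (intro allI impI)
      fix v :: "real vec" assume v: "v \<in> carrier_vec n" and h: "(R ^\<^sub>m Suc (Suc p)) *\<^sub>v v = 0\<^sub>v n"
      have Pc: "R ^\<^sub>m Suc p \<in> carrier_mat n n" using Rc by (metis pow_mat_dim_square carrier_matI)
      have "(R ^\<^sub>m Suc p) *\<^sub>v (R *\<^sub>v v) = 0\<^sub>v n"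
        using h assoc_mult_mat_vec[OF Pc Rc v] by simp
      then have "R *\<^sub>v (R *\<^sub>v v) = 0\<^sub>v n" using Suc.IH Rc v by simp
      then show "R *\<^sub>v v = 0\<^sub>v n" using red_ss[OF v] by simp
    qed
  qed
  then show ?thesis using q v by (metis Suc_pred)
qed

lemma span_ker:
  assumes "v \<in> Eig R"
  shows "v \<in> carrier_vec n \<and> R *\<^sub>v v = 0\<^sub>v n"
proof -
  have dr: "dim_row R = n" using Rc by simp
  obtain vs cs where l: "length cs = length vs" and s: "set vs \<subseteq> {v. gen_eigenvector R 0 v}"
    and v: "v = foldr (+) (map2 (\<lambda>c w. c \<cdot>\<^sub>v w) cs vs) (0\<^sub>v n)"
    using assms unfolding Eig_def vec_span_def dr by blast
  have "\<forall>x\<in>set vs. x \<in> carrier_vec n \<and> R *\<^sub>v x = 0\<^sub>v n" using s gen_ker by auto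
  then have "foldr (+) (map2 (\<lambda>c w. c \<cdot>\<^sub>v w) cs vs) (0\<^sub>v n) \<in> carrier_vec n \<and>
      R *\<^sub>v foldr (+) (map2 (\<lambda>c w. c \<cdot>\<^sub>v w) cs vs) (0\<^sub>v n) = 0\<^sub>v n"
    using l
  proof (induction vs arbitrary: cs)
    case Nil
    then show ?case using Rc by (auto intro!: eq_vecI)
  next
    case (Cons x vs)
    then obtain c cs' where cs: "cs = c # cs'" "length cs' = length vs" by (cases cs) auto
    define f where "f = foldr (+) (map2 (\<lambda>c w. c \<cdot>\<^sub>v w) cs' vs) (0\<^sub>v n)"
    have f: "f \<in> carrier_vec n" "R *\<^sub>v f = 0\<^sub>v n" using Cons cs unfolding f_def by auto
    have x: "x \<in> carrier_vec n" "R *\<^sub>v x = 0\<^sub>v n" using Cons by auto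
    have e: "foldr (+) (map2 (\<lambda>c w. c \<cdot>\<^sub>v w) cs (x # vs)) (0\<^sub>v n) = c \<cdot>\<^sub>v x + f"
      unfolding f_def cs by simp
    have "R *\<^sub>v (c \<cdot>\<^sub>v x + f) = R *\<^sub>v (c \<cdot>\<^sub>v x) + R *\<^sub>v f"
      using mult_add_distrib_mat_vec[OF Rc _ f(1)] x by simp
    also have "\<dots> = c \<cdot>\<^sub>v (R *\<^sub>v x) + R *\<^sub>v f" using mult_mat_vec[OF Rc x(1)] by simp
    also have "\<dots> = 0\<^sub>v n" using x f by (auto intro!: eq_vecI)
    finally show ?case using e x f by simp
  qed
  then show ?thesis using v by simp
qed

end


theorem lemma7:
  fixes N m :: nat and L :: "nat \<Rightarrow> real mat"
  assumes "N \<ge> 2"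
    and "\<And>j. j < m \<Longrightarrow> is_laplacian N (L j)"
    and "has_spanning_tree N
           (adjacency_of_laplacian N (mat N N (\<lambda>(i,k). \<Sum>j<m. L j $$ (i,k))))"
  shows "(\<Inter>j\<in>{..<m}. Eig (reduced_laplacian N (L j))) = {0\<^sub>v (N-1)}"
proof -
  define n where "n = N - 1"
  have Nn: "N = Suc n" using assms(1) unfolding n_def by simp
  have "\<forall>j. \<exists>W. j < m \<longrightarrow> is_adjacency N W \<and> L j = laplacian_of N W"
    using assms(2) unfolding is_laplacian_def by blast
  then obtain Wf where Wf: "\<And>j. j < m \<Longrightarrow> is_adjacency N (Wf j) \<and> L j = laplacian_of N (Wf j)"
    by metis
  have loc: "redlap N n (Wf j)" if "j < m" for j
    using Wf[OF that] Nn unfolding is_adjacency_def redlap_def by auto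
  define E where "E = digraph_edges N (adjacency_of_laplacian N (mat N N (\<lambda>(i,k). \<Sum>j<m. L j $$ (i,k))))"
  obtain r where r: "r < N" "\<forall>k<N. k \<noteq> r \<longrightarrow> (r,k) \<in> E\<^sup>+"
    using assms(3) unfolding has_spanning_tree_def E_def by blast
  have Eprop: "i < N \<and> k < N \<and> (\<exists>j<m. Wf j $$ (i,k) > 0)" if ki: "(k,i) \<in> E" for i k
  proof -
    have ik: "i < N" "k < N" and pos: "adjacency_of_laplacian N (mat N N (\<lambda>(i,k). \<Sum>j<m. L j $$ (i,k))) $$ (i,k) > 0"
      using ki unfolding E_def digraph_edges_def by auto
    have ne: "i \<noteq> k" using pos ik unfolding adjacency_of_laplacian_def by auto
    have "(\<Sum>j<m. L j $$ (i,k)) < 0" using pos ik ne unfolding adjacency_of_laplacian_def by simp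
    moreover have "(\<Sum>j<m. L j $$ (i,k)) = (\<Sum>j<m. - Wf j $$ (i,k))"
    proof (intro sum.cong refl)
      fix j assume "j \<in> {..<m}"
      then have "is_adjacency N (Wf j)" "L j = laplacian_of N (Wf j)" using Wf by auto
      then show "L j $$ (i,k) = - Wf j $$ (i,k)"
        using ik ne unfolding is_adjacency_def laplacian_of_def by auto
    qed
    ultimately have "(\<Sum>j<m. Wf j $$ (i,k)) > 0" by (simp add: sum_negf)
    then have "\<exists>j<m. Wf j $$ (i,k) > 0"
      by (metis (no_types, lifting) lessThan_iff not_le sum_nonpos)
    then show ?thesis using ik by auto
  qed
  show ?thesis
  proof (cases "m = 0")
    case True
    define k :: nat where "k = (if r = 0 then 1 else 0)"
    have "k < N" "k \<noteq> r" using assms(1) r unfolding k_def by auto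
    then have "(r,k) \<in> E\<^sup>+" using r by auto
    then obtain y where "(r,y) \<in> E" by (metis tranclD)
    then show ?thesis using Eprop True by auto
  next
    case False
    show ?thesis
    proof
      show "{0\<^sub>v (N-1)} \<subseteq> (\<Inter>j\<in>{..<m}. Eig (reduced_laplacian N (L j)))"
      proof (clarsimp)
        fix j assume "j < m"
        have "dim_row (reduced_laplacian N (L j)) = N - 1"
          using red_carrier[of N "L j"] by simp
        then show "0\<^sub>v (N - Suc 0) \<in> Eig (reduced_laplacian N (L j))"
          unfolding Eig_def vec_span_def
          by (auto intro!: exI[of _ "[]"])
      qed
    next
      show "(\<Inter>j\<in>{..<m}. Eig (reduced_laplacian N (L j))) \<subseteq> {0\<^sub>v (N-1)}"
      proof
        fix y assume y: "y \<in> (\<Inter>j\<in>{..<m}. Eig (reduced_laplacian N (L j)))"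
        have yk: "y \<in> carrier_vec n \<and> reduced_laplacian N (L j) *\<^sub>v y = 0\<^sub>v n" if j: "j < m" for j
        proof -
          have "y \<in> Eig (reduced_laplacian N (L j))" using y j by auto
          then show ?thesis using redlap.span_ker[OF loc[OF j], of y] Wf[OF j] by simp
        qed
        have yc: "y \<in> carrier_vec n" using yk False by blast
        have lx: "\<forall>j<m. \<forall>i<N. lap (Wf j) N (zf y) i = 0"
          using redlap.red_zero[OF loc, of _ y] yk Wf yc by auto
        have W: "\<forall>j<m. \<forall>i<N. \<forall>k<N. Wf j $$ (i,k) \<ge> 0" using Wf unfolding is_adjacency_def by blast
        have c: "\<forall>k<N. zf y k = zf y r" using const_root[OF W lx Eprop r] by blast
        have "zf y r = 0" using c[rule_format, of 0] Nn by (simp add: zf_def)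
        have "y = 0\<^sub>v n"
        proof (rule eq_vecI)
          show "dim_vec y = dim_vec (0\<^sub>v n)" using yc by simp
          fix i assume "i < dim_vec (0\<^sub>v n)"
          then have "Suc i < N" using Nn by simp
          then show "y $ i = 0\<^sub>v n $ i" using c \<open>zf y r = 0\<close> Nn by (force simp: zf_def)
        qed
        then show "y \<in> {0\<^sub>v (N-1)}" using n_def by simp
      qed
    qed
  qed
qed

end
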